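(* Each of $r_0$ and $r_1$ has a unique fixed point in $[0,1]$, denoted $\eta_0$ and $\eta_1$ respectively, and each is a global attractor of the corresponding dynamical system on $[0,1]$: $r_i^k(z)\to\eta_i$ as $k\to\infty$ for every $z\in[0,1]$, $i\in\{0,1\}$.
   Context: Parameters $a,b,p,q\in(0,1)$ with $a+b\ne1$. $\alpha_0(z)=(1-p)(a+b-1)z+1-b+pb$, $\alpha_1(z)=(1-q)(1-a-b)z+b+q-bq$, $r_0(z)=\frac{(a+b-1)z+1-b}{\alpha_0(z)}$, $r_1(z)=\frac{q(a+b-1)z+q-qb}{\alpha_1(z)}$; these map $[0,1]$ into $[0,1]$. *)

theory Defs
  imports Complex_Main
begin

definition alpha0 :: "real \<Rightarrow> real \<Rightarrow> real \<Rightarrow> real \<Rightarrow> real \<Rightarrow> real" where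
  "alpha0 a b p q z = (1 - p) * (a + b - 1) * z + 1 - b + p * b"

definition alpha1 :: "real \<Rightarrow> real \<Rightarrow> real \<Rightarrow> real \<Rightarrow> real \<Rightarrow> real" where
  "alpha1 a b p q z = (1 - q) * (1 - a - b) * z + b + q - b * q"

definition r0 :: "real \<Rightarrow> real \<Rightarrow> real \<Rightarrow> real \<Rightarrow> real \<Rightarrow> real" where
  "r0 a b p q z = ((a + b - 1) * z + 1 - b) / alpha0 a b p q z"

definition r1 :: "real \<Rightarrow> real \<Rightarrow> real \<Rightarrow> real \<Rightarrow> real \<Rightarrow> real" where
  "r1 a b p q z = (q * (a + b - 1) * z + q - q * b) / alpha1 a b p q z"

end

theory Submission
  imports Defs
begin

lemma mob:
  fixes A B C D :: real
  assumes hB: "B>0" and hAB: "A+B>0" and hDB: "D-B>0" and h1: "C+D-A-B>0"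
    and hD: "D>0" and hCD: "C+D>0" and hAD: "A+D>0" and hdet: "A*D-B*C \<noteq> 0"
  shows "\<exists>\<eta>. (\<forall>x\<in>{0..1}. (\<lambda>x. (A*x+B)/(C*x+D)) x = x \<longleftrightarrow> x = \<eta>) \<and> \<eta> \<in> {0..1} \<and>
     (\<forall>z\<in>{0..1}. (\<lambda>k. (((\<lambda>x. (A*x+B)/(C*x+D)) ^^ k) z)) \<longlonglongrightarrow> \<eta>)"
proof -
  define f where "f = (\<lambda>x::real. (A*x+B)/(C*x+D))"
  define h where "h = (\<lambda>x::real. x*(C*x+D) - (A*x+B))"
  have den: "C*x+D > 0" if "x \<in> {0..1}" for x
  proof -
    have "C*x+D = (1-x)*D + x*(C+D)" by (simp add: algebra_simps)
    moreover have "(1-x)*D \<ge> 0" "x*(C+D) \<ge> 0" using that hD hCD by auto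
    moreover have "(1-x)*D > 0 \<or> x*(C+D) > 0" using that hD hCD by (cases "x = 1") auto
    ultimately show ?thesis by linarith
  qed
  have fix_iff: "f x = x \<longleftrightarrow> h x = 0" if "x \<in> {0..1}" for x
    using den[OF that] by (auto simp: f_def h_def field_simps)
  have "\<exists>x. 0 \<le> x \<and> x \<le> 1 \<and> h x = 0"
    by (rule IVT') (use hB h1 in \<open>auto simp: h_def algebra_simps intro!: continuous_intros\<close>)
  then obtain \<eta> where e0: "0 \<le> \<eta>" and e1: "\<eta> \<le> 1" and he: "h \<eta> = 0" by auto
  have e0': "0 < \<eta>" using he hB e0 by (cases "\<eta> = 0") (auto simp: h_def)
  have e1': "\<eta> < 1" using he h1 e1 by (cases "\<eta> = 1") (auto simp: h_def algebra_simps)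
  define hp where "hp = 2*C*\<eta> + D - A"
  have tay: "h x = (x-\<eta>)*(C*(x-\<eta>) + hp)" for x
    using he unfolding h_def hp_def by (simp add: algebra_simps power2_eq_square)
  have t0: "\<eta> * (C*\<eta> - hp) < 0" using tay[of 0] hB by (simp add: h_def algebra_simps)
  have t1: "(1-\<eta>) * (C*(1-\<eta>) + hp) > 0" using tay[of 1] h1 by (simp add: h_def algebra_simps)
  have a0: "C*\<eta> < hp" using t0 e0' by (simp add: mult_less_0_iff)
  have a1: "C*(1-\<eta>) + hp > 0" using t1 e1' by (simp add: zero_less_mult_iff)
  have hpp: "hp > 0"
  proof (rule ccontr)
    assume "\<not> hp > 0"
    then have "C > 0" using a1 e1' by (smt (verit) mult_nonpos_nonneg)
    then show False using a0 e0' \<open>\<not> hp > 0\<close> by (smt (verit) mult_pos_pos)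
  qed
  have uniq: "x = \<eta>" if "x \<in> {0..1}" "h x = 0" for x
  proof (rule ccontr)
    assume ne: "x \<noteq> \<eta>"
    then have eq: "C*(x-\<eta>) = -hp" using tay[of x] that by auto
    have "C > 0 \<or> C < 0 \<or> C = 0" by auto
    then show False
    proof (elim disjE)
      assume "C > 0"
      then have "C*(x-\<eta>) \<ge> C*(0-\<eta>)" using that by (intro mult_left_mono) auto
      then show False using eq a0 by simp
    next
      assume "C < 0"
      then have "C*(x-\<eta>) \<ge> C*(1-\<eta>)" using that by (intro mult_left_mono_neg) auto
      then show False using eq a1 by simp
    qed (use eq hpp in auto)
  qed
  have maps: "f x \<in> {0..1}" if "x \<in> {0..1}" for x
  proof -
    have n0: "A*x+B \<ge> 0"
    proof -
      have "A*x+B = (1-x)*B + x*(A+B)" by (simp add: algebra_simps)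
      moreover have "(1-x)*B \<ge> 0" "x*(A+B) \<ge> 0" using that hB hAB by auto
      ultimately show ?thesis by linarith
    qed
    have n1: "A*x+B \<le> C*x+D"
    proof -
      have "C*x+D - (A*x+B) = (1-x)*(D-B) + x*(C+D-A-B)" by (simp add: algebra_simps)
      moreover have "(1-x)*(D-B) \<ge> 0" "x*(C+D-A-B) \<ge> 0" using that hDB h1 by auto
      ultimately show ?thesis by linarith
    qed
    show ?thesis using n0 n1 den[OF that] by (auto simp: f_def divide_simps)
  qed
  have iter: "(f^^n) z \<in> {0..1}" if "z \<in> {0..1}" for z n
    using that by (induction n) (use maps in auto)
  define E where "E = C*\<eta> + D"
  define \<Delta> where "\<Delta> = A*D-B*C"
  have Ep: "E > 0" unfolding E_def using den[of \<eta>] e0 e1 by auto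
  have hz: "\<eta>*(C*\<eta>+D) - (A*\<eta>+B) = 0" using he by (simp add: h_def)
  have q1': "E^2 - \<Delta> - E*hp = -C*(\<eta>*(C*\<eta>+D) - (A*\<eta>+B))" unfolding E_def \<Delta>_def hp_def
    by (simp add: algebra_simps power2_eq_square)
  have q1: "E^2 - \<Delta> = E*hp" using q1' hz by simp
  have hz2: "C*(\<eta>*(C*\<eta>+D) - (A*\<eta>+B)) = 0" using hz by simp
  have q2': "E^2 + \<Delta> - E*(A+D) = C*(\<eta>*(C*\<eta>+D) - (A*\<eta>+B))" unfolding E_def \<Delta>_def
    by (simp add: algebra_simps power2_eq_square)
  have q2: "E^2 + \<Delta> = E*(A+D)" using q2' hz by simp
  have lt1: "\<Delta> < E^2" using q1 Ep hpp by (smt (verit) mult_pos_pos)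
  have lt2: "-\<Delta> < E^2" using q2 Ep hAD by (smt (verit) mult_pos_pos)
  define \<mu> where "\<mu> = \<Delta>/E^2"
  have mu: "\<bar>\<mu>\<bar> < 1" unfolding \<mu>_def using lt1 lt2 Ep by (auto simp: abs_less_iff divide_simps)
  have dne: "\<Delta> \<noteq> 0" using hdet by (simp add: \<Delta>_def)
  have step: "f x - \<eta> = \<Delta>*(x-\<eta>)/((C*x+D)*E)" if "x \<in> {0..1}" for x
  proof -
    have "f \<eta> = \<eta>" using fix_iff[of \<eta>] e0 e1 he by auto
    then have "f x - \<eta> = f x - f \<eta>" by simp
    also have "\<dots> = \<Delta>*(x-\<eta>)/((C*x+D)*E)"
      using den[OF that] Ep unfolding f_def \<Delta>_def E_def
      by (simp add: field_simps)
    finally show ?thesis .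
  qed
  have conv: "(\<lambda>k. (f^^k) z) \<longlonglongrightarrow> \<eta>" if zin: "z \<in> {0..1}" for z
  proof (cases "z = \<eta>")
    case True
    have "f \<eta> = \<eta>" using fix_iff[of \<eta>] e0 e1 he by auto
    then have "(f^^k) z = \<eta>" for k using True by (induction k) auto
    then show ?thesis by simp
  next
    case False
    define u where "u = (\<lambda>n. (f^^n) z - \<eta>)"
    have usuc: "u (Suc n) = \<Delta> * u n / ((E + C*u n)*E)" for n
    proof -
      have "u (Suc n) = f ((f^^n) z) - \<eta>" by (simp add: u_def)
      also have "\<dots> = \<Delta>*u n/((C*(f^^n) z+D)*E)" using step[OF iter[OF zin]] by (simp add: u_def)
      also have "C*(f^^n) z+D = E + C*u n" by (simp add: u_def E_def algebra_simps)
      finally show ?thesis .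
    qed
    have dpos: "E + C*u n > 0" for n
    proof -
      have "E + C*u n = C*(f^^n) z+D" by (simp add: u_def E_def algebra_simps)
      then show ?thesis using den[OF iter[OF zin]] by simp
    qed
    have unz: "u n \<noteq> 0" for n
    proof (induction n)
      case 0 then show ?case using False by (simp add: u_def)
    next
      case (Suc n) then show ?case using usuc[of n] dpos[of n] Ep dne by simp
    qed
    define lam where "lam = E^2/\<Delta>"
    define K where "K = C*E/(\<Delta> - E^2)"
    have dE: "\<Delta> - E^2 \<noteq> 0" using lt1 by simp
    have vrec: "1/u (Suc n) = lam/u n + C*E/\<Delta>" for n
      using usuc[of n] dpos[of n] Ep dne unz[of n] unfolding lam_def
      by (simp add: field_simps power2_eq_square)
    have Kfix: "lam*K + C*E/\<Delta> = K"
      unfolding lam_def K_def using dne dE by (simp add: field_simps power2_eq_square)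
    have closed: "1/u n = K + lam^n * (1/u 0 - K)" for n
    proof (induction n)
      case (Suc n)
      have "1/u (Suc n) = lam*(1/u n) + C*E/\<Delta>" using vrec[of n] by simp
      also have "\<dots> = lam*(K + lam^n * (1/u 0 - K)) + C*E/\<Delta>" using Suc by simp
      also have "\<dots> = (lam*K + C*E/\<Delta>) + lam^Suc n * (1/u 0 - K)" by (simp add: algebra_simps)
      finally show ?case using Kfix by simp
    qed simp
    define w where "w = 1/u 0 - K"
    have wnz: "w \<noteq> 0"
    proof
      assume "w = 0"
      then have "1/u 1 = 1/u 0" using closed[of 1] closed[of 0] by (simp add: w_def)
      then have "u 1 = u 0" by simp
      then have "f z = z" by (simp add: u_def)
      then show False using fix_iff[OF zin] uniq[OF zin] False by auto
    qed
    have lmu: "lam * \<mu> = 1" unfolding lam_def \<mu>_def using dne Ep by simp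
    have uform: "u n = \<mu>^n / (K*\<mu>^n + w)" for n
    proof -
      have "lam^n * \<mu>^n = 1" using lmu by (metis power_mult_distrib power_one)
      then have "\<mu>^n \<noteq> 0" by (metis mult_zero_right zero_neq_one)
      have "1/u n = K + lam^n * w" using closed[of n] by (simp add: w_def)
      then have "u n = 1/(K + lam^n*w)" by (metis divide_divide_eq_right div_by_1 mult_1 divide_self_if unz)
      also have "\<dots> = \<mu>^n/(\<mu>^n*(K + lam^n*w))" using \<open>\<mu>^n \<noteq> 0\<close> by simp
      also have "\<mu>^n*(K + lam^n*w) = K*\<mu>^n + w" using \<open>lam^n * \<mu>^n = 1\<close>
        by (simp add: algebra_simps)
      finally show ?thesis .
    qed
    have m0: "(\<lambda>n. \<mu>^n) \<longlonglongrightarrow> 0" using mu by (rule LIMSEQ_abs_realpow_zero2)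
    have lim: "(\<lambda>n. \<mu>^n / (K*\<mu>^n + w)) \<longlonglongrightarrow> 0 / (K*0 + w)"
      by (intro tendsto_intros m0) (use wnz in simp)
    have ueq: "u = (\<lambda>n. \<mu>^n / (K*\<mu>^n + w))" using uform by (rule ext)
    have z0: "0/(K*0+w) = (0::real)" by simp
    have "u \<longlonglongrightarrow> 0" using lim unfolding ueq z0 .
    then have "(\<lambda>n. u n + \<eta>) \<longlonglongrightarrow> 0 + \<eta>" by (rule tendsto_add[OF _ tendsto_const])
    then show ?thesis by (simp add: u_def)
  qed
  have A1: "\<forall>x\<in>{0..1}. f x = x \<longleftrightarrow> x = \<eta>"
  proof
    fix x :: real assume xin: "x \<in> {0..1}"
    show "f x = x \<longleftrightarrow> x = \<eta>"
    proof
      assume "f x = x" then show "x = \<eta>" using fix_iff[OF xin] uniq[OF xin] by simp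
    next
      assume "x = \<eta>" then show "f x = x" using fix_iff[OF xin] he by simp
    qed
  qed
  have A2: "\<eta> \<in> {0..1}" using e0 e1 by simp
  have A3: "\<forall>z\<in>{0..1}. (\<lambda>k. (f^^k) z) \<longlonglongrightarrow> \<eta>" using conv by blast
  have "\<exists>\<eta>. (\<forall>x\<in>{0..1}. f x = x \<longleftrightarrow> x = \<eta>) \<and> \<eta> \<in> {0..1} \<and> (\<forall>z\<in>{0..1}. (\<lambda>k. (f^^k) z) \<longlonglongrightarrow> \<eta>)"
    using A1 A2 A3 by (intro exI[of _ \<eta>]) simp
  then show ?thesis by (simp only: f_def)
qed

theorem lemma2p31:
  fixes a b p q :: real
  assumes "0 < a" "a < 1" "0 < b" "b < 1" "0 < p" "p < 1" "0 < q" "q < 1"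
    and "a + b \<noteq> 1"
  shows "\<forall>r \<in> {r0 a b p q, r1 a b p q}.
           \<exists>\<eta>. (\<forall>x \<in> {0..1}. r x = x \<longleftrightarrow> x = \<eta>) \<and> \<eta> \<in> {0..1} \<and>
             (\<forall>z \<in> {0..1}. (\<lambda>k. (r ^^ k) z) \<longlonglongrightarrow> \<eta>)"
proof -
  have c: "a+b-1 \<noteq> 0" using assms by simp
  have f1: "a*p < a" "b*p < b" "0 < b*p" "0 < a*p" "a*q < a" "b*q < b" "0 < b*q" "0 < a*q" "a*p < p" "a*q < q" "b*q < q"
    using assms by (auto simp: mult_less_cancel_left1)
  have R0: "r0 a b p q = (\<lambda>x. ((a+b-1)*x+(1-b))/(((1-p)*(a+b-1))*x+(1-b+p*b)))"
    by (rule ext) (simp add: r0_def alpha0_def algebra_simps)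
  have R1: "r1 a b p q = (\<lambda>x. ((q*(a+b-1))*x+(q*(1-b)))/((-(1-q)*(a+b-1))*x+(b+q-b*q)))"
    by (rule ext) (simp add: r1_def alpha1_def algebra_simps)
  have M0: "\<exists>\<eta>. (\<forall>x \<in> {0..1}. r0 a b p q x = x \<longleftrightarrow> x = \<eta>) \<and> \<eta> \<in> {0..1} \<and>
             (\<forall>z \<in> {0..1}. (\<lambda>k. (r0 a b p q ^^ k) z) \<longlonglongrightarrow> \<eta>)"
    unfolding R0
  proof (rule mob)
    show "(a+b-1)*(1-b+p*b) - (1-b)*((1-p)*(a+b-1)) \<noteq> 0"
    proof -
      have "(a+b-1)*(1-b+p*b) - (1-b)*((1-p)*(a+b-1)) = (a+b-1)*p" by (simp add: algebra_simps)
      then show ?thesis using c assms by simp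
    qed
    show "0 < 1 - b" using assms by simp
    show "0 < a + b - 1 + (1 - b)" using assms by simp
    have "1 - b + p * b - (1 - b) = b*p" by (simp add: algebra_simps mult.commute)
    then show "0 < 1 - b + p * b - (1 - b)" using f1 by linarith
    have "(1 - p) * (a + b - 1) + (1 - b + p * b) - (a + b - 1) - (1 - b) = p - a*p"
      by (simp add: algebra_simps)
    then show "0 < (1 - p) * (a + b - 1) + (1 - b + p * b) - (a + b - 1) - (1 - b)"
      using f1 assms by linarith
    have "1 - b + p * b = (1-b) + b*p" by (simp add: algebra_simps)
    then show "0 < 1 - b + p * b" using f1 assms by linarith
    have "(1 - p) * (a + b - 1) + (1 - b + p * b) = (a - a*p) + p" by (simp add: algebra_simps)
    then show "0 < (1 - p) * (a + b - 1) + (1 - b + p * b)" using f1 assms by linarith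
    have "a + b - 1 + (1 - b + p * b) = a + b*p" by (simp add: algebra_simps)
    then show "0 < a + b - 1 + (1 - b + p * b)" using f1 assms by linarith
  qed
  have M1: "\<exists>\<eta>. (\<forall>x \<in> {0..1}. r1 a b p q x = x \<longleftrightarrow> x = \<eta>) \<and> \<eta> \<in> {0..1} \<and>
             (\<forall>z \<in> {0..1}. (\<lambda>k. (r1 a b p q ^^ k) z) \<longlonglongrightarrow> \<eta>)"
    unfolding R1
  proof (rule mob)
    show "q*(a+b-1)*(b+q-b*q) - q*(1-b)*(-(1-q)*(a+b-1)) \<noteq> 0"
    proof -
      have "q*(a+b-1)*(b+q-b*q) - q*(1-b)*(-(1-q)*(a+b-1)) = q*(a+b-1)" by (simp add: algebra_simps)
      then show ?thesis using c assms by simp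
    qed
    have "q*(1-b) = q - b*q" by (simp add: algebra_simps)
    then show "0 < q*(1-b)" using f1 assms by linarith
    have "q*(a+b-1) + q*(1-b) = a*q" by (simp add: algebra_simps)
    then show "0 < q*(a+b-1) + q*(1-b)" using f1 by linarith
    have "b+q-b*q - q*(1-b) = b" by (simp add: algebra_simps)
    then show "0 < b+q-b*q - q*(1-b)" using assms by linarith
    have "-(1-q)*(a+b-1) + (b+q-b*q) - q*(a+b-1) - q*(1-b) = 1 - a" by (simp add: algebra_simps)
    then show "0 < -(1-q)*(a+b-1) + (b+q-b*q) - q*(a+b-1) - q*(1-b)" using assms by linarith
    have "b+q-b*q = b + (q - b*q)" by simp
    then show "0 < b+q-b*q" using f1 assms by linarith
    have "-(1-q)*(a+b-1) + (b+q-b*q) = 1 - a + a*q" by (simp add: algebra_simps)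
    then show "0 < -(1-q)*(a+b-1) + (b+q-b*q)" using f1 assms by linarith
    have "q*(a+b-1) + (b+q-b*q) = a*q + b" by (simp add: algebra_simps)
    then show "0 < q*(a+b-1) + (b+q-b*q)" using f1 assms by linarith
  qed
  show ?thesis using M0 M1 by auto
qed

end
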